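(* Let $\sigma$ be a term ordering on $\mathbb{T}^n$, let $I$ be a non-zero ideal in $\mathbb{Q}[x_1,\dots,x_n]$, and let $G_\sigma$ be its reduced $\sigma$-Gröbner basis. Let $J=\langle\operatorname{prim}(G_\sigma)\rangle\subseteq\mathbb{Z}[x_1,\dots,x_n]$. Then $\operatorname{rad}(\operatorname{den}(G_\sigma))=\operatorname{rad}(\operatorname{lcm}_\sigma(J))$.
   Context: $\mathbb{T}^n$ is the monoid of power-products in $x_1,\dots,x_n$; $\mathrm{LT}_\sigma$, $\mathrm{LC}_\sigma$, $\mathrm{LM}_\sigma$ denote leading term, leading coefficient and leading monomial. For $f\in\mathbb{Q}[x_1,\dots,x_n]$, $\operatorname{den}(f)$ is the positive lcm of the denominators of its coefficients; $\operatorname{den}(F)$ is the lcm of $\operatorname{den}(f)$, $f\in F$. For non-zero $f$, with $c$ the integer content of $f\cdot\operatorname{den}(f)$, $\operatorname{prim}(f)=c^{-1}f\cdot\operatorname{den}(f)$, and $\operatorname{prim}(F)=\{\operatorname{prim}(f):f\in F\}$. For a positive integer $N$, $\operatorname{rad}(N)$ is the product of the distinct primes dividing $N$. Non-zero $g_1,\dots,g_s\in\mathbb{Z}[x_1,\dots,x_n]$ form a strong $\sigma$-Gröbner basis of $\langle g_1,\dots,g_s\rangle$ if for every non-zero $f$ in this ideal some $\mathrm{LM}_\sigma(g_i)$ divides $\mathrm{LM}_\sigma(f)$; it is minimal if moreover $\mathrm{LM}_\sigma(g_i)\nmid\mathrm{LM}_\sigma(g_j)$ for $i\ne j$. Every non-zero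 ideal of $\mathbb{Z}[x_1,\dots,x_n]$ has a minimal strong $\sigma$-Gröbner basis, and all of them have the same set of leading coefficients. For an ideal $J$ of $\mathbb{Z}[x_1,\dots,x_n]$, $\operatorname{lcm}_\sigma(J)$ is the least common multiple of the leading coefficients of the elements of a minimal strong $\sigma$-Gröbner basis of $J$. *)

theory Defs
  imports Complex_Main "HOL-Library.Poly_Mapping" "HOL-Computational_Algebra.Primes"
begin

(* Multivariate polynomials in x_0,...,x_{n-1} (the paper's x_1,...,x_n) with
coefficients in 'a are represented as finitely supported maps from power-products
(finitely supported exponent vectors nat \<Rightarrow>_0 nat) to coefficients, restricted to
power-products involving only the first n variables. *)

type_synonym pp = "nat \<Rightarrow>\<^sub>0 nat"
type_synonym 'a mpoly = "pp \<Rightarrow>\<^sub>0 'a"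

definition PP :: "nat \<Rightarrow> pp set"
  where "PP n = {t. Poly_Mapping.keys t \<subseteq> {..<n}}"

definition is_poly :: "nat \<Rightarrow> 'a::zero mpoly \<Rightarrow> bool"
  where "is_poly n f \<longleftrightarrow> Poly_Mapping.keys f \<subseteq> PP n"

definition pp_dvd :: "pp \<Rightarrow> pp \<Rightarrow> bool"
  where "pp_dvd s t \<longleftrightarrow> (\<exists>u. t = s + u)"

definition term_order :: "nat \<Rightarrow> (pp \<Rightarrow> pp \<Rightarrow> bool) \<Rightarrow> bool" where
  "term_order n le \<longleftrightarrow>
     (\<forall>t\<in>PP n. le t t) \<and>
     (\<forall>s\<in>PP n. \<forall>t\<in>PP n. le s t \<and> le t s \<longrightarrow> s = t) \<and>
     (\<forall>r\<in>PP n. \<forall>s\<in>PP n. \<forall>t\<in>PP n. le r s \<and> le s t \<longrightarrow> le r t) \<and>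
     (\<forall>s\<in>PP n. \<forall>t\<in>PP n. le s t \<or> le t s) \<and>
     (\<forall>s\<in>PP n. \<forall>t\<in>PP n. \<forall>u\<in>PP n. le s t \<longrightarrow> le (s + u) (t + u)) \<and>
     (\<forall>t\<in>PP n. le 0 t)"

definition LT :: "(pp \<Rightarrow> pp \<Rightarrow> bool) \<Rightarrow> 'a::zero mpoly \<Rightarrow> pp" where
  "LT le f = (THE t. t \<in> Poly_Mapping.keys f \<and> (\<forall>s\<in>Poly_Mapping.keys f. le s t))"

definition LC :: "(pp \<Rightarrow> pp \<Rightarrow> bool) \<Rightarrow> 'a::zero mpoly \<Rightarrow> 'a" where
  "LC le f = Poly_Mapping.lookup f (LT le f)"

definition LM_dvd :: "(pp \<Rightarrow> pp \<Rightarrow> bool) \<Rightarrow> 'a::{zero,comm_monoid_mult} mpoly \<Rightarrow> 'a mpoly \<Rightarrow> bool" where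
  "LM_dvd le g f \<longleftrightarrow> LC le g dvd LC le f \<and> pp_dvd (LT le g) (LT le f)"

definition is_ideal :: "nat \<Rightarrow> 'a::comm_ring_1 mpoly set \<Rightarrow> bool" where
  "is_ideal n I \<longleftrightarrow> (\<forall>f\<in>I. is_poly n f) \<and> 0 \<in> I \<and>
     (\<forall>f\<in>I. \<forall>g\<in>I. f + g \<in> I) \<and>
     (\<forall>f\<in>I. \<forall>h. is_poly n h \<longrightarrow> h * f \<in> I)"

definition ideal_gen :: "nat \<Rightarrow> 'a::comm_ring_1 mpoly set \<Rightarrow> 'a mpoly set" where
  "ideal_gen n F = {(\<Sum>g\<in>F. c g * g) | c. \<forall>g\<in>F. is_poly n (c g)}"

definition reduced_GB :: "nat \<Rightarrow> (pp \<Rightarrow> pp \<Rightarrow> bool) \<Rightarrow> 'a::field mpoly set \<Rightarrow> 'a mpoly set \<Rightarrow> bool" where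
  "reduced_GB n le I G \<longleftrightarrow>
     finite G \<and> G \<subseteq> I \<and> 0 \<notin> G \<and>
     (\<forall>f\<in>I. f \<noteq> 0 \<longrightarrow> (\<exists>g\<in>G. pp_dvd (LT le g) (LT le f))) \<and>
     (\<forall>g\<in>G. LC le g = 1) \<and>
     (\<forall>g\<in>G. \<forall>g'\<in>G. g \<noteq> g' \<longrightarrow> (\<forall>t\<in>Poly_Mapping.keys g. \<not> pp_dvd (LT le g') t))"

definition strong_GB :: "nat \<Rightarrow> (pp \<Rightarrow> pp \<Rightarrow> bool) \<Rightarrow> int mpoly set \<Rightarrow> int mpoly set \<Rightarrow> bool" where
  "strong_GB n le J B \<longleftrightarrow>
     finite B \<and> 0 \<notin> B \<and> (\<forall>g\<in>B. is_poly n g) \<and> ideal_gen n B = J \<and>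
     (\<forall>f\<in>J. f \<noteq> 0 \<longrightarrow> (\<exists>g\<in>B. LM_dvd le g f))"

definition minimal_strong_GB :: "nat \<Rightarrow> (pp \<Rightarrow> pp \<Rightarrow> bool) \<Rightarrow> int mpoly set \<Rightarrow> int mpoly set \<Rightarrow> bool" where
  "minimal_strong_GB n le J B \<longleftrightarrow> strong_GB n le J B \<and>
     (\<forall>g\<in>B. \<forall>g'\<in>B. g \<noteq> g' \<longrightarrow> \<not> LM_dvd le g g')"

(* lcm_sigma(J): lcm of the leading coefficients of a minimal strong GB of J
(well defined since all such bases have the same leading coefficients). *)
definition lcm_sigma :: "nat \<Rightarrow> (pp \<Rightarrow> pp \<Rightarrow> bool) \<Rightarrow> int mpoly set \<Rightarrow> nat" where
  "lcm_sigma n le J = (THE m. \<exists>B. minimal_strong_GB n le J B \<and> m = nat (Lcm (LC le ` B)))"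

definition den :: "rat mpoly \<Rightarrow> nat" where
  "den f = Lcm ((\<lambda>t. nat (snd (quotient_of (Poly_Mapping.lookup f t)))) ` Poly_Mapping.keys f)"

definition den_set :: "rat mpoly set \<Rightarrow> nat" where
  "den_set F = Lcm (den ` F)"

definition rat_to_int :: "rat \<Rightarrow> int" where
  "rat_to_int q = fst (quotient_of q)"

definition prim :: "rat mpoly \<Rightarrow> int mpoly" where
  "prim f = (let g = Poly_Mapping.map (\<lambda>q. rat_to_int (q * of_nat (den f))) f;
                 c = Gcd (Poly_Mapping.lookup g ` Poly_Mapping.keys g)
             in Poly_Mapping.map (\<lambda>a. a div c) g)"

definition rad :: "nat \<Rightarrow> nat" where
  "rad N = (\<Prod>p\<in>prime_factors N. p)"

end

theory Submission
  imports Defs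
begin

lemma pp_dvd_iff: "pp_dvd s t \<longleftrightarrow> (\<forall>i. Poly_Mapping.lookup s i \<le> Poly_Mapping.lookup t i)"
proof
  assume "pp_dvd s t" then obtain u where "t = s + u" by (auto simp: pp_dvd_def)
  then show "\<forall>i. Poly_Mapping.lookup s i \<le> Poly_Mapping.lookup t i" by (simp add: lookup_add)
next
  assume a: "\<forall>i. Poly_Mapping.lookup s i \<le> Poly_Mapping.lookup t i"
  have "t = s + (t - s)"
    by (rule poly_mapping_eqI) (use a in \<open>simp add: lookup_add minus_poly_mapping.rep_eq\<close>)
  then show "pp_dvd s t" by (auto simp: pp_dvd_def)
qed

lemma pp_dvd_refl: "pp_dvd s s" by (simp add: pp_dvd_iff)
lemma pp_dvd_trans: "pp_dvd r s \<Longrightarrow> pp_dvd s t \<Longrightarrow> pp_dvd r t"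
  by (auto simp: pp_dvd_iff intro: order_trans)
lemma pp_dvd_antisym: "pp_dvd s t \<Longrightarrow> pp_dvd t s \<Longrightarrow> s = t"
  by (auto simp: pp_dvd_iff intro!: poly_mapping_eqI intro: antisym)
lemma pp_dvd_add: "pp_dvd s (s + u)" by (auto simp: pp_dvd_def)

lemma PP_add: "s \<in> PP n \<Longrightarrow> t \<in> PP n \<Longrightarrow> s + t \<in> PP n"
  unfolding PP_def using keys_add[of s t] by auto

lemma PP_dvd: "pp_dvd s t \<Longrightarrow> t \<in> PP n \<Longrightarrow> s \<in> PP n"
proof -
  assume a: "pp_dvd s t" "t \<in> PP n"
  have "x \<in> Poly_Mapping.keys t" if "x \<in> Poly_Mapping.keys s" for x
    using a(1) that unfolding pp_dvd_iff in_keys_iff by (metis le_zero_eq)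
  then show ?thesis using a(2) by (auto simp: PP_def)
qed

lemma PP_diff: "t \<in> PP n \<Longrightarrow> t - s \<in> PP n"
proof -
  assume a: "t \<in> PP n"
  have "x \<in> Poly_Mapping.keys t" if "x \<in> Poly_Mapping.keys (t - s)" for x
    using that by (auto simp: in_keys_iff minus_poly_mapping.rep_eq)
  then show ?thesis using a by (auto simp: PP_def)
qed

lemma PP_zero: "0 \<in> PP n" by (simp add: PP_def)

locale tord =
  fixes n :: nat and le :: "pp \<Rightarrow> pp \<Rightarrow> bool"
  assumes to: "term_order n le"
begin

lemma refl: "t \<in> PP n \<Longrightarrow> le t t" using to unfolding term_order_def by blast
lemma antisym: "s \<in> PP n \<Longrightarrow> t \<in> PP n \<Longrightarrow> le s t \<Longrightarrow> le t s \<Longrightarrow> s = t"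
  using to unfolding term_order_def by blast
lemma trans: "r \<in> PP n \<Longrightarrow> s \<in> PP n \<Longrightarrow> t \<in> PP n \<Longrightarrow> le r s \<Longrightarrow> le s t \<Longrightarrow> le r t"
  using to unfolding term_order_def by blast
lemma total: "s \<in> PP n \<Longrightarrow> t \<in> PP n \<Longrightarrow> le s t \<or> le t s"
  using to unfolding term_order_def by blast
lemma mono: "s \<in> PP n \<Longrightarrow> t \<in> PP n \<Longrightarrow> u \<in> PP n \<Longrightarrow> le s t \<Longrightarrow> le (s + u) (t + u)"
  using to unfolding term_order_def by blast
lemma zero_min: "t \<in> PP n \<Longrightarrow> le 0 t"
  using to unfolding term_order_def by blast

lemma le_plus: "s \<in> PP n \<Longrightarrow> u \<in> PP n \<Longrightarrow> le s (s + u)"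
  using mono[OF PP_zero, of u s] zero_min[of u] by (simp add: add.commute)

lemma le_dvd: "pp_dvd s t \<Longrightarrow> t \<in> PP n \<Longrightarrow> le s t"
  using le_plus PP_dvd PP_diff unfolding pp_dvd_def by (metis add_diff_cancel_left')

lemma mono2: "s \<in> PP n \<Longrightarrow> t \<in> PP n \<Longrightarrow> u \<in> PP n \<Longrightarrow> le s t \<Longrightarrow> le (u + s) (u + t)"
  using mono by (simp add: add.commute)

lemma mono_strict: "s \<in> PP n \<Longrightarrow> t \<in> PP n \<Longrightarrow> u \<in> PP n \<Longrightarrow> le s t \<Longrightarrow> s \<noteq> t \<Longrightarrow>
   le (u + s) (u + t) \<and> u + s \<noteq> u + t"
  using mono2 by simp

lemma max_exists: "finite A \<Longrightarrow> A \<noteq> {} \<Longrightarrow> A \<subseteq> PP n \<Longrightarrow> \<exists>t\<in>A. \<forall>s\<in>A. le s t"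
proof (induction A rule: finite_ne_induct)
  case (singleton x) then show ?case using refl by auto
next
  case (insert x F)
  then obtain t where t: "t \<in> F" "\<forall>s\<in>F. le s t" by auto
  show ?case
  proof (cases "le x t")
    case True then show ?thesis using t insert refl by auto
  next
    case False
    then have "le t x" using total insert t by blast
    have "\<forall>s\<in>insert x F. le s x"
    proof
      fix s assume "s \<in> insert x F"
      then show "le s x"
      proof
        assume "s = x" then show ?thesis using refl insert by auto
      next
        assume "s \<in> F" then show ?thesis using t insert \<open>le t x\<close> trans[of s t x] by auto
      qed
    qed
    then show ?thesis by auto
  qed
qed

lemma keys_PP: "is_poly n f \<Longrightarrow> Poly_Mapping.keys f \<subseteq> PP n" by (simp add: is_poly_def)

lemma LT_eq: "is_poly n f \<Longrightarrow> t \<in> Poly_Mapping.keys f \<Longrightarrow> \<forall>s\<in>Poly_Mapping.keys f. le s t \<Longrightarrow> LT le f = t"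
  unfolding LT_def
  by (rule the_equality) (auto dest: keys_PP intro: antisym)

lemma LT_props: assumes "is_poly n f" "f \<noteq> 0"
  shows "LT le f \<in> Poly_Mapping.keys f" "\<forall>s\<in>Poly_Mapping.keys f. le s (LT le f)"
proof -
  obtain t where "t \<in> Poly_Mapping.keys f" "\<forall>s\<in>Poly_Mapping.keys f. le s t"
    using max_exists[of "Poly_Mapping.keys f"] assms keys_PP by auto
  with LT_eq[OF assms(1)] show "LT le f \<in> Poly_Mapping.keys f" "\<forall>s\<in>Poly_Mapping.keys f. le s (LT le f)" by auto
qed

lemma LT_PP: "is_poly n f \<Longrightarrow> f \<noteq> 0 \<Longrightarrow> LT le f \<in> PP n"
  using LT_props keys_PP by blast

lemma LC_nz: "is_poly n f \<Longrightarrow> f \<noteq> 0 \<Longrightarrow> LC le f \<noteq> 0"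
  using LT_props(1) by (simp add: LC_def in_keys_iff)

lemma LT_max: "is_poly n f \<Longrightarrow> s \<in> Poly_Mapping.keys f \<Longrightarrow> le s (LT le f)"
  using LT_props by fastforce

end

lemma lookup_single_mult:
  fixes h :: "pp \<Rightarrow>\<^sub>0 'a::comm_semiring_1"
  shows "Poly_Mapping.lookup (Poly_Mapping.single u c * h) (u + s) = c * Poly_Mapping.lookup h s"
proof -
  have "Poly_Mapping.lookup (Poly_Mapping.single u c * h) (u + s) =
    (\<Sum>l. (c when u = l) * (\<Sum>q. Poly_Mapping.lookup h q when u + s = l + q))"
    by (simp only: lookup_mult lookup_single)
  also have "\<dots> = (\<Sum>l. (c * (\<Sum>q. Poly_Mapping.lookup h q when u + s = l + q)) when u = l)"
    by (simp only: when_mult)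
  also have "\<dots> = c * (\<Sum>q. Poly_Mapping.lookup h q when u + s = u + q)"
    by (rule Sum_any_when_equal')
  also have "(\<Sum>q. Poly_Mapping.lookup h q when u + s = u + q) = (\<Sum>q. Poly_Mapping.lookup h q when s = q)"
    by (simp only: add_left_cancel)
  also have "\<dots> = Poly_Mapping.lookup h s"
    by (rule Sum_any_when_equal')
  finally show ?thesis .
qed

lemma keys_single_mult:
  fixes h :: "pp \<Rightarrow>\<^sub>0 'a::comm_semiring_1"
  shows "Poly_Mapping.keys (Poly_Mapping.single u c * h) \<subseteq> (+) u ` Poly_Mapping.keys h"
  using keys_mult[of "Poly_Mapping.single u c" h] by (auto split: if_splits)

lemma lookup_single_mult_gen:
  fixes h :: "pp \<Rightarrow>\<^sub>0 'a::comm_semiring_1"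
  shows "Poly_Mapping.lookup (Poly_Mapping.single u c * h) k =
    (if pp_dvd u k then c * Poly_Mapping.lookup h (k - u) else 0)"
proof (cases "pp_dvd u k")
  case True
  then obtain s where "k = u + s" by (auto simp: pp_dvd_def)
  then show ?thesis using True by (simp add: lookup_single_mult)
next
  case False
  then have "k \<notin> Poly_Mapping.keys (Poly_Mapping.single u c * h)"
    using keys_single_mult[of u c h] by (auto simp: pp_dvd_def)
  then show ?thesis using False by (simp add: in_keys_iff)
qed

lemma keys_minus_sub: "Poly_Mapping.keys (f - g :: 'x \<Rightarrow>\<^sub>0 'a::ab_group_add) \<subseteq> Poly_Mapping.keys f \<union> Poly_Mapping.keys g"
  by (auto simp: in_keys_iff lookup_minus)

lemma keys_uminus: "Poly_Mapping.keys (- f :: 'x \<Rightarrow>\<^sub>0 'a::ab_group_add) = Poly_Mapping.keys f"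
  by (auto simp: in_keys_iff)

lemma is_poly_zero: "is_poly n 0" by (simp add: is_poly_def)
lemma is_poly_add: "is_poly n f \<Longrightarrow> is_poly n g \<Longrightarrow> is_poly n (f + g)"
  unfolding is_poly_def using keys_add[of f g] by blast
lemma is_poly_diff: "is_poly n f \<Longrightarrow> is_poly n g \<Longrightarrow> is_poly n (f - g :: 'a::ab_group_add mpoly)"
  unfolding is_poly_def using keys_minus_sub[of f g] by blast
lemma is_poly_uminus: "is_poly n f \<Longrightarrow> is_poly n (- f :: 'a::ab_group_add mpoly)"
  unfolding is_poly_def by (simp add: keys_uminus)
lemma is_poly_mult: "is_poly n f \<Longrightarrow> is_poly n g \<Longrightarrow> is_poly n (f * g :: 'a::comm_semiring_1 mpoly)"
  unfolding is_poly_def using keys_mult[of f g] PP_add by blast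
lemma is_poly_single: "u \<in> PP n \<Longrightarrow> is_poly n (Poly_Mapping.single u c)"
  unfolding is_poly_def by (auto simp: PP_zero)
lemma is_poly_sum: "(\<And>x. x \<in> A \<Longrightarrow> is_poly n (f x)) \<Longrightarrow> is_poly n (sum f A)"
  by (induction A rule: infinite_finite_induct) (auto intro: is_poly_zero is_poly_add)
lemma is_poly_one: "is_poly n (1 :: 'a::comm_semiring_1 mpoly)"
  using is_poly_single[OF PP_zero, of n "1::'a"] by simp

lemma ideal_minus: "is_ideal n J \<Longrightarrow> f \<in> J \<Longrightarrow> g \<in> J \<Longrightarrow> f - g \<in> J"
proof -
  assume a: "is_ideal n J" "f \<in> J" "g \<in> J"
  have "(- 1) * g \<in> J" using a is_poly_uminus[OF is_poly_one] unfolding is_ideal_def by blast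
  then show ?thesis using a unfolding is_ideal_def by (metis diff_conv_add_uminus mult_minus1)
qed

lemma ideal_mult: "is_ideal n J \<Longrightarrow> f \<in> J \<Longrightarrow> is_poly n h \<Longrightarrow> h * f \<in> J"
  unfolding is_ideal_def by blast
lemma ideal_add: "is_ideal n J \<Longrightarrow> f \<in> J \<Longrightarrow> g \<in> J \<Longrightarrow> f + g \<in> J"
  unfolding is_ideal_def by blast
lemma ideal_zero: "is_ideal n J \<Longrightarrow> 0 \<in> J"
  unfolding is_ideal_def by blast
lemma ideal_poly: "is_ideal n J \<Longrightarrow> f \<in> J \<Longrightarrow> is_poly n f"
  unfolding is_ideal_def by blast
lemma ideal_sum: "is_ideal n J \<Longrightarrow> (\<And>x. x \<in> A \<Longrightarrow> f x \<in> J) \<Longrightarrow> sum f A \<in> J"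
  by (induction A rule: infinite_finite_induct) (auto intro: ideal_zero ideal_add)

lemma ideal_gen_sub: "is_ideal n J \<Longrightarrow> F \<subseteq> J \<Longrightarrow> ideal_gen n F \<subseteq> J"
  unfolding ideal_gen_def by (auto intro!: ideal_sum ideal_mult)

lemma ideal_gen_ideal:
  fixes F :: "'a::comm_ring_1 mpoly set"
  assumes "finite F" "\<forall>g\<in>F. is_poly n g"
  shows "is_ideal n (ideal_gen n F)"
  unfolding is_ideal_def
proof (intro conjI ballI allI impI)
  fix f assume "f \<in> ideal_gen n F"
  then show "is_poly n f" using assms
    by (auto simp: ideal_gen_def intro!: is_poly_sum is_poly_mult)
next
  show "0 \<in> ideal_gen n F" unfolding ideal_gen_def
    by (rule CollectI, rule exI[of _ "\<lambda>_. 0"]) (auto simp: is_poly_zero)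
next
  fix f g assume "f \<in> ideal_gen n F" "g \<in> ideal_gen n F"
  then obtain c d where "f = (\<Sum>g\<in>F. c g * g)" "\<forall>g\<in>F. is_poly n (c g)"
    "g = (\<Sum>g\<in>F. d g * g)" "\<forall>g\<in>F. is_poly n (d g)" by (auto simp: ideal_gen_def)
  then show "f + g \<in> ideal_gen n F" unfolding ideal_gen_def
    by (intro CollectI exI[of _ "\<lambda>x. c x + d x"])
      (auto simp: sum.distrib distrib_right is_poly_add)
next
  fix f and h :: "'a mpoly" assume "f \<in> ideal_gen n F" "is_poly n h"
  then obtain c where "f = (\<Sum>g\<in>F. c g * g)" "\<forall>g\<in>F. is_poly n (c g)"
    by (auto simp: ideal_gen_def)
  then show "h * f \<in> ideal_gen n F" using \<open>is_poly n h\<close> unfolding ideal_gen_def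
    by (intro CollectI exI[of _ "\<lambda>x. h * c x"])
      (auto simp: sum_distrib_left mult.assoc is_poly_mult)
qed

lemma ideal_gen_gen:
  assumes "finite F" "g \<in> F"
  shows "g \<in> ideal_gen n (F :: 'a::comm_ring_1 mpoly set)"
  unfolding ideal_gen_def
proof (intro CollectI exI conjI)
  show "g = (\<Sum>x\<in>F. (if x = g then 1 else 0) * x)"
    using assms by (simp add: sum.delta[of F g "\<lambda>x. x"] if_distrib[of "\<lambda>c. c * _"] cong: if_cong)
  show "\<forall>x\<in>F. is_poly n (if x = g then 1 else 0 :: 'a mpoly)"
    by (auto simp: is_poly_one is_poly_zero)
qed

definition proj :: "nat \<Rightarrow> pp \<Rightarrow> pp" where "proj k s = Poly_Mapping.update k 0 s"

lemma lookup_proj: "Poly_Mapping.lookup (proj k s) i = (if k = i then 0 else Poly_Mapping.lookup s i)"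
  by (simp add: proj_def lookup_update)

lemma proj_PP: "s \<in> PP (Suc n) \<Longrightarrow> proj n s \<in> PP n"
  unfolding PP_def proj_def by (auto simp: keys_update)

lemma dvd_proj: "pp_dvd a b \<longleftrightarrow> pp_dvd (proj k a) (proj k b) \<and> Poly_Mapping.lookup a k \<le> Poly_Mapping.lookup b k"
proof
  assume "pp_dvd a b" then show "pp_dvd (proj k a) (proj k b) \<and> Poly_Mapping.lookup a k \<le> Poly_Mapping.lookup b k"
    unfolding pp_dvd_iff lookup_proj by auto
next
  assume a: "pp_dvd (proj k a) (proj k b) \<and> Poly_Mapping.lookup a k \<le> Poly_Mapping.lookup b k"
  show "pp_dvd a b" unfolding pp_dvd_iff
  proof
    fix i show "Poly_Mapping.lookup a i \<le> Poly_Mapping.lookup b i"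
    proof (cases "i = k")
      case True then show ?thesis using a by simp
    next
      case False then show ?thesis using a unfolding pp_dvd_iff lookup_proj by metis
    qed
  qed
qed

lemma PP_0: "PP 0 = {0}"
  unfolding PP_def by auto

lemma lift_basis:
  assumes IH: "\<forall>S. S \<subseteq> PP n \<longrightarrow> (\<exists>F. finite F \<and> F \<subseteq> S \<and> (\<forall>s\<in>S. \<exists>f\<in>F. pp_dvd f s))"
    and S: "S \<subseteq> PP (Suc n)"
  shows "\<exists>G. finite G \<and> G \<subseteq> S \<and> (\<forall>s\<in>S. \<exists>g\<in>G. pp_dvd (proj n g) (proj n s))"
proof -
  have pS: "proj n ` S \<subseteq> PP n" using S by (auto intro!: proj_PP)
  obtain F where F: "finite F" "F \<subseteq> proj n ` S" "\<forall>s\<in>proj n ` S. \<exists>f\<in>F. pp_dvd f s"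
    using IH[rule_format, OF pS] by (elim exE conjE) (rule that)
  obtain G where G: "G \<subseteq> S" "finite G" "F = proj n ` G"
    using finite_subset_image[OF F(1,2)] by (elim exE conjE) (rule that)
  show ?thesis using G F by (intro exI[of _ G]) auto
qed

lemma dickson: "S \<subseteq> PP n \<Longrightarrow> \<exists>F. finite F \<and> F \<subseteq> S \<and> (\<forall>s\<in>S. \<exists>f\<in>F. pp_dvd f s)"
proof (induction n arbitrary: S)
  case 0
  then show ?case using PP_0 pp_dvd_refl by (intro exI[of _ S]) (auto intro: finite_subset)
next
  case (Suc n)
  have IH: "\<forall>S. S \<subseteq> PP n \<longrightarrow> (\<exists>F. finite F \<and> F \<subseteq> S \<and> (\<forall>s\<in>S. \<exists>f\<in>F. pp_dvd f s))"
    using Suc.IH by blast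
  note lb = lift_basis[of n, OF IH]
  obtain G0 where G0: "finite G0" "G0 \<subseteq> S" "\<forall>s\<in>S. \<exists>g\<in>G0. pp_dvd (proj n g) (proj n s)"
    using lb[OF Suc.prems] by (elim exE conjE) (rule that)
  define m where "m = Max (insert 0 ((\<lambda>g. Poly_Mapping.lookup g n) ` G0))"
  have m: "\<And>g. g \<in> G0 \<Longrightarrow> Poly_Mapping.lookup g n \<le> m"
    unfolding m_def using G0(1) by auto
  define Sk where "Sk k = {s\<in>S. Poly_Mapping.lookup s n = k}" for k
  have "\<forall>k. \<exists>G. finite G \<and> G \<subseteq> Sk k \<and> (\<forall>s\<in>Sk k. \<exists>g\<in>G. pp_dvd (proj n g) (proj n s))"
  proof
    fix k have "Sk k \<subseteq> PP (Suc n)" using Suc.prems unfolding Sk_def by auto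
    from lb[OF this] show "\<exists>G. finite G \<and> G \<subseteq> Sk k \<and> (\<forall>s\<in>Sk k. \<exists>g\<in>G. pp_dvd (proj n g) (proj n s))" .
  qed
  then obtain Gk where Gk: "\<And>k. finite (Gk k)" "\<And>k. Gk k \<subseteq> Sk k"
     "\<And>k. \<forall>s\<in>Sk k. \<exists>g\<in>Gk k. pp_dvd (proj n g) (proj n s)"
    by metis
  define F where "F = G0 \<union> (\<Union>k<m. Gk k)"
  have "finite F" unfolding F_def using G0 Gk by auto
  moreover have "F \<subseteq> S" unfolding F_def using G0(2) Gk(2) unfolding Sk_def by blast
  moreover have "\<exists>f\<in>F. pp_dvd f s" if s: "s \<in> S" for s
  proof (cases "m \<le> Poly_Mapping.lookup s n")
    case True
    obtain g where "g \<in> G0" "pp_dvd (proj n g) (proj n s)" using G0(3) s by blast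
    moreover then have "Poly_Mapping.lookup g n \<le> Poly_Mapping.lookup s n" using m True by fastforce
    ultimately show ?thesis unfolding F_def using dvd_proj by blast
  next
    case False
    define k where "k = Poly_Mapping.lookup s n"
    have "s \<in> Sk k" using s unfolding Sk_def k_def by auto
    then obtain g where g: "g \<in> Gk k" "pp_dvd (proj n g) (proj n s)" using Gk(3) by blast
    then have "Poly_Mapping.lookup g n = Poly_Mapping.lookup s n" using Gk(2) unfolding Sk_def k_def by auto
    then have "pp_dvd g s" using g dvd_proj by fastforce
    moreover have "g \<in> F" unfolding F_def using g False k_def by auto
    ultimately show ?thesis by blast
  qed
  ultimately show ?case by blast
qed

lemma dickson_seq:
  fixes f :: "nat \<Rightarrow> pp"
  assumes "\<And>i. f i \<in> PP n"
  shows "\<exists>i j. i < j \<and> pp_dvd (f i) (f j)"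
proof -
  obtain F where F: "finite F" "F \<subseteq> range f" "\<forall>s\<in>range f. \<exists>g\<in>F. pp_dvd g s"
    using dickson[of "range f" n] assms by auto
  obtain C where C: "C \<subseteq> UNIV" "finite C" "F = f ` C"
    using finite_subset_image[OF F(1,2)] by blast
  define N where "N = Max (insert 0 C)"
  obtain g where "g \<in> F" "pp_dvd g (f (Suc N))" using F(3) by blast
  then obtain i where "i \<in> C" "pp_dvd (f i) (f (Suc N))" using C by auto
  moreover then have "i < Suc N" unfolding N_def using C(2) by (simp add: le_imp_less_Suc)
  ultimately show ?thesis by blast
qed

context tord begin

definition lt :: "pp \<Rightarrow> pp \<Rightarrow> bool" where "lt s t \<longleftrightarrow> le s t \<and> s \<noteq> t"

lemma wf_lt: "wf {(s, t). s \<in> PP n \<and> t \<in> PP n \<and> lt s t}"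
proof (rule ccontr)
  assume "\<not> ?thesis"
  then obtain f where f: "\<And>i. (f (Suc i), f i) \<in> {(s, t). s \<in> PP n \<and> t \<in> PP n \<and> lt s t}"
    unfolding wf_iff_no_infinite_down_chain by blast
  then have fP: "\<And>i. f i \<in> PP n" and fl: "\<And>i. le (f (Suc i)) (f i)" and fne: "\<And>i. f (Suc i) \<noteq> f i"
    by (auto simp: lt_def)
  have chain: "le (f (i + k)) (f i)" for i k
  proof (induction k)
    case 0 then show ?case using refl fP by simp
  next
    case (Suc k) then show ?case using trans[OF fP fP fP fl[of "i + k"]] by simp
  qed
  obtain i j where ij: "i < j" "pp_dvd (f i) (f j)" using dickson_seq[OF fP] by blast
  then have "le (f i) (f j)" using le_dvd fP by blast
  moreover have "le (f j) (f i)" using chain[of i "j - i"] ij by simp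
  ultimately have eq: "f i = f j" using antisym fP by blast
  have "le (f j) (f (Suc i))" using chain[of "Suc i" "j - Suc i"] ij by simp
  then have "le (f i) (f (Suc i))" using eq by simp
  then have "f (Suc i) = f i" using antisym fP fl by blast
  then show False using fne by blast
qed

lemma lt_induct:
  assumes "t \<in> PP n" "\<And>t. t \<in> PP n \<Longrightarrow> (\<And>s. s \<in> PP n \<Longrightarrow> lt s t \<Longrightarrow> P s) \<Longrightarrow> P t"
  shows "P t"
proof -
  have "t \<in> PP n \<longrightarrow> P t"
    by (rule wf_induct[OF wf_lt]) (use assms(2) in blast)
  then show ?thesis using assms(1) by blast
qed

end

lemma prime_dvd_Lcm_iff:
  fixes p :: "'a::{factorial_semiring_gcd, semiring_Gcd}"
  assumes "prime p" "finite A"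
  shows "p dvd Lcm A \<longleftrightarrow> (\<exists>a\<in>A. p dvd a)"
  using assms(2)
proof (induction A rule: finite_induct)
  case empty then show ?case using assms(1) by (simp add: not_prime_unit)
next
  case (insert a A)
  have "p dvd lcm a (Lcm A) \<longleftrightarrow> p dvd a \<or> p dvd Lcm A"
  proof
    assume "p dvd lcm a (Lcm A)"
    moreover have "lcm a (Lcm A) dvd a * Lcm A" by (rule lcm_least) simp_all
    ultimately have "p dvd a * Lcm A" using dvd_trans by blast
    then show "p dvd a \<or> p dvd Lcm A" using prime_dvd_mult_iff[OF assms(1)] by blast
  next
    assume "p dvd a \<or> p dvd Lcm A"
    then show "p dvd lcm a (Lcm A)" by (meson dvd_lcm1 dvd_lcm2 dvd_trans)
  qed
  then show ?case using insert by simp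
qed

definition ri :: "int mpoly \<Rightarrow> rat mpoly" where "ri f = Poly_Mapping.map of_int f"

lemma lookup_ri: "Poly_Mapping.lookup (ri f) k = of_int (Poly_Mapping.lookup f k)"
  by (simp add: ri_def map.rep_eq when_def)

lemma keys_ri: "Poly_Mapping.keys (ri f) = Poly_Mapping.keys f"
  by (auto simp: in_keys_iff lookup_ri)

lemma ri_add: "ri (f + g) = ri f + ri g"
  by (rule poly_mapping_eqI) (simp add: lookup_ri lookup_add)

lemma ri_zero: "ri 0 = 0"
  by (rule poly_mapping_eqI) (simp add: lookup_ri)

lemma ri_eq_0: "ri f = 0 \<longleftrightarrow> f = 0"
  by (metis keys_eq_empty keys_ri)

lemma ri_sum: "ri (sum f A) = (\<Sum>x\<in>A. ri (f x))"
  by (induction A rule: infinite_finite_induct) (auto simp: ri_zero ri_add)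

lemma ri_single_mult: "ri (Poly_Mapping.single u c * h) = Poly_Mapping.single u (of_int c) * ri h"
  by (rule poly_mapping_eqI) (simp add: lookup_ri lookup_single_mult_gen)

lemma update_as_add: "a \<notin> Poly_Mapping.keys f \<Longrightarrow> Poly_Mapping.update a b f = f + Poly_Mapping.single a b"
  by (rule poly_mapping_eqI) (auto simp: lookup_update lookup_add lookup_single in_keys_iff)

lemma ri_single: "ri (Poly_Mapping.single a b) = Poly_Mapping.single a (of_int b)"
  by (rule poly_mapping_eqI) (simp add: lookup_ri lookup_single when_def)

lemma ri_mult: "ri (f * g) = ri f * ri g"
proof (induction f rule: update_induct)
  case const then show ?case by (simp add: ri_zero)
next
  case (update f a b)
  have "ri (Poly_Mapping.update a b f * g) = ri (f * g) + ri (Poly_Mapping.single a b * g)"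
    using update(1) by (simp add: update_as_add distrib_right ri_add)
  also have "\<dots> = ri f * ri g + Poly_Mapping.single a (of_int b) * ri g"
    using update(3) by (simp add: ri_single_mult)
  also have "\<dots> = (ri f + Poly_Mapping.single a (of_int b)) * ri g"
    by (simp add: distrib_right)
  also have "ri f + Poly_Mapping.single a (of_int b) = ri (Poly_Mapping.update a b f)"
    using update(1) by (simp add: update_as_add ri_add ri_single)
  finally show ?case .
qed

lemma lookup_smult:
  fixes h :: "pp \<Rightarrow>\<^sub>0 'a::comm_semiring_1"
  shows "Poly_Mapping.lookup (Poly_Mapping.single 0 c * h) k = c * Poly_Mapping.lookup h k"
  using lookup_single_mult[of 0 c h k] by simp

lemma is_poly_ri: "is_poly n (ri f) \<longleftrightarrow> is_poly n f"
  by (simp add: is_poly_def keys_ri)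

lemma den_pos: "den f > 0"
proof -
  let ?A = "(\<lambda>t. nat (snd (quotient_of (Poly_Mapping.lookup f t)))) ` Poly_Mapping.keys f"
  have "0 \<notin> ?A"
  proof
    assume "0 \<in> ?A"
    then obtain t where "nat (snd (quotient_of (Poly_Mapping.lookup f t))) = 0" by auto
    moreover have "snd (quotient_of (Poly_Mapping.lookup f t)) > 0" by (rule quotient_of_denom_pos')
    ultimately show False by simp
  qed
  then have "Lcm ?A \<noteq> 0" by (simp add: Lcm_0_iff)
  then show ?thesis unfolding den_def by (simp only: gr0I)
qed

lemma denom_dvd_den: "k \<in> Poly_Mapping.keys f \<Longrightarrow> nat (snd (quotient_of (Poly_Mapping.lookup f k))) dvd den f"
  unfolding den_def by (rule dvd_Lcm) auto

lemma den_least: "(\<And>k. k \<in> Poly_Mapping.keys f \<Longrightarrow> nat (snd (quotient_of (Poly_Mapping.lookup f k))) dvd m) \<Longrightarrow> den f dvd m"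
  unfolding den_def by (rule Lcm_least) auto

lemma int_mult_denom:
  assumes "quotient_of q = (a, b)" "b dvd D"
  shows "q * of_int D = of_int (a * (D div b))"
proof -
  have b: "b > 0" using quotient_of_denom_pos[OF assms(1)] .
  obtain e where D: "D = b * e" using assms(2) by blast
  have "q = of_int a / of_int b" using quotient_of_div[OF assms(1)] .
  then show ?thesis using b D by simp
qed

lemma denom_dvd_if_int:
  assumes "quotient_of q = (a, b)" "q * of_int E = of_int m"
  shows "b dvd E"
proof -
  have b: "b > 0" using quotient_of_denom_pos[OF assms(1)] .
  have "q = of_int a / of_int b" using quotient_of_div[OF assms(1)] .
  then have qa: "q * of_int b = of_int a" using b by simp
  have "of_int a * of_int E = (q * of_int E) * (of_int b :: rat)" by (simp add: qa[symmetric] algebra_simps)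
  then have "of_int a * of_int E = (of_int m * of_int b :: rat)" using assms(2) by simp
  then have "a * E = m * b" by (metis of_int_eq_iff of_int_mult)
  then have "b dvd a * E" by simp
  moreover have "coprime a b" using quotient_of_coprime[OF assms(1)] .
  ultimately show ?thesis by (metis coprime_commute coprime_dvd_mult_right_iff)
qed

lemma nat_dvd_nat: "0 \<le> b \<Longrightarrow> b dvd E \<Longrightarrow> nat b dvd nat E"
proof -
  assume b: "0 \<le> b" "b dvd E"
  then obtain e where e: "E = b * e" by blast
  show ?thesis
  proof (cases "e \<ge> 0")
    case True then show ?thesis using e b by (simp add: nat_mult_distrib)
  next
    case False
    then have "E \<le> 0" using e b by (simp add: mult_nonneg_nonpos)
    then show ?thesis by simp
  qed
qed

lemma rat_to_int_of_int: "rat_to_int (of_int x) = x"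
  by (simp add: rat_to_int_def quotient_of_int)

lemma prim_props:
  assumes t0: "t0 \<in> Poly_Mapping.keys g" "Poly_Mapping.lookup g t0 = 1"
  shows "\<And>k. of_int (Poly_Mapping.lookup (prim g) k) = Poly_Mapping.lookup g k * of_nat (den g)"
    and "Gcd (Poly_Mapping.lookup (prim g) ` Poly_Mapping.keys (prim g)) = 1"
proof -
  define d where "d = den g"
  define D where "D = int d"
  have dpos: "D > 0" using den_pos unfolding D_def d_def by simp
  define gi where "gi = Poly_Mapping.map (\<lambda>q. rat_to_int (q * of_nat d)) g"
  have E1: "of_int (Poly_Mapping.lookup gi k) = Poly_Mapping.lookup g k * of_nat d" for k
  proof (cases "Poly_Mapping.lookup g k = 0")
    case True then show ?thesis by (simp add: gi_def map.rep_eq)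
  next
    case False
    then have k: "k \<in> Poly_Mapping.keys g" by (simp add: in_keys_iff)
    obtain a b where ab: "quotient_of (Poly_Mapping.lookup g k) = (a, b)" by (cases "quotient_of (Poly_Mapping.lookup g k)")
    have "nat b dvd d" using denom_dvd_den[OF k] ab unfolding d_def by simp
    moreover have "b > 0" using quotient_of_denom_pos[OF ab] .
    ultimately have "b dvd D" unfolding D_def by (metis int_dvd_int_iff zero_less_imp_eq_int nat_int)
    then have eq: "Poly_Mapping.lookup g k * of_nat d = of_int (a * (D div b))"
      using int_mult_denom[OF ab \<open>b dvd D\<close>] unfolding D_def by (metis of_int_of_nat_eq)
    have "rat_to_int (of_int (a * (D div b))) = a * (D div b)" by (rule rat_to_int_of_int)
    then show ?thesis using False by (simp add: gi_def map.rep_eq eq del: of_int_mult)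
  qed
  define c where "c = Gcd (Poly_Mapping.lookup gi ` Poly_Mapping.keys gi)"
  have gt0: "Poly_Mapping.lookup gi t0 = D"
    using E1[of t0] t0(2) unfolding D_def by (metis mult_1 of_int_of_nat_eq of_int_eq_iff)
  then have t0k: "t0 \<in> Poly_Mapping.keys gi" using dpos by (simp add: in_keys_iff)
  have cdvd: "c dvd Poly_Mapping.lookup gi k" for k
  proof (cases "k \<in> Poly_Mapping.keys gi")
    case True then show ?thesis unfolding c_def by (simp add: Gcd_dvd)
  next
    case False then show ?thesis by (simp add: in_keys_iff)
  qed
  have cD: "c dvd D" using cdvd[of t0] gt0 by simp
  have cnz: "c \<noteq> 0" unfolding c_def using t0k gt0 dpos by (auto simp: Gcd_0_iff)
  have cge: "c \<ge> 0" unfolding c_def by simp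
  have prim_eq: "prim g = Poly_Mapping.map (\<lambda>a. a div c) gi"
    unfolding prim_def Let_def gi_def c_def d_def by simp
  have lp: "Poly_Mapping.lookup (prim g) k = Poly_Mapping.lookup gi k div c" for k
    by (simp add: prim_eq map.rep_eq when_def)
  define E where "E = D div c"
  have DE: "D = E * c" unfolding E_def using cD by simp
  have Epos: "E > 0" using DE dpos cge cnz by (simp add: zero_less_mult_iff)
  have E2: "Poly_Mapping.lookup g k * of_int E = of_int (Poly_Mapping.lookup (prim g) k)" for k
  proof -
    obtain m where m: "Poly_Mapping.lookup gi k = c * m" using cdvd[of k] by blast
    have "of_int (c * m) = Poly_Mapping.lookup g k * of_int (E * c)"
      using E1[of k] m DE unfolding D_def by (metis of_int_of_nat_eq)
    then have "of_int m = Poly_Mapping.lookup g k * of_int E" using cnz by (simp add: field_simps)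
    then show ?thesis using lp[of k] m cnz by simp
  qed
  have "den g dvd nat E"
  proof (rule den_least)
    fix k assume k: "k \<in> Poly_Mapping.keys g"
    obtain a b where ab: "quotient_of (Poly_Mapping.lookup g k) = (a, b)" by (cases "quotient_of (Poly_Mapping.lookup g k)")
    have "b dvd E" using denom_dvd_if_int[OF ab E2] .
    moreover have "b \<ge> 0" using quotient_of_denom_pos[OF ab] by simp
    ultimately show "nat (snd (quotient_of (Poly_Mapping.lookup g k))) dvd nat E" using ab
      by (simp add: nat_dvd_nat)
  qed
  then have "int (den g) dvd int (nat E)" by (simp only: of_nat_dvd_iff)
  then have "D dvd E" unfolding D_def d_def using Epos by simp
  moreover have "E dvd D" using DE by simp
  ultimately have "E = D" using Epos dpos by (simp add: zdvd_antisym_nonneg)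
  then have c1: "c = 1" using DE dpos Epos by simp
  show "\<And>k. of_int (Poly_Mapping.lookup (prim g) k) = Poly_Mapping.lookup g k * of_nat (den g)"
    using E2 \<open>E = D\<close> unfolding D_def d_def by (metis of_int_of_nat_eq)
  have "prim g = gi" using lp c1 by (intro poly_mapping_eqI) simp
  then show "Gcd (Poly_Mapping.lookup (prim g) ` Poly_Mapping.keys (prim g)) = 1"
    using c1 unfolding c_def by simp
qed

lemma keys_single_mult_eq:
  fixes h :: "'a::idom mpoly"
  assumes "c \<noteq> 0"
  shows "Poly_Mapping.keys (Poly_Mapping.single u c * h) = (+) u ` Poly_Mapping.keys h"
proof
  show "Poly_Mapping.keys (Poly_Mapping.single u c * h) \<subseteq> (+) u ` Poly_Mapping.keys h"
    by (rule keys_single_mult)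
  show "(+) u ` Poly_Mapping.keys h \<subseteq> Poly_Mapping.keys (Poly_Mapping.single u c * h)"
    using assms by (auto simp: in_keys_iff lookup_single_mult)
qed

lemma keys_smult_sub:
  fixes h :: "'a::comm_semiring_1 mpoly"
  shows "Poly_Mapping.keys (Poly_Mapping.single 0 c * h) \<subseteq> Poly_Mapping.keys h"
  using keys_single_mult[of 0 c h] by simp

context tord begin

lemma LT_single_mult:
  fixes h :: "'a::idom mpoly"
  assumes h: "is_poly n h" "h \<noteq> 0" and c: "c \<noteq> 0" and u: "u \<in> PP n"
  shows "is_poly n (Poly_Mapping.single u c * h)" "Poly_Mapping.single u c * h \<noteq> 0"
    "LT le (Poly_Mapping.single u c * h) = u + LT le h"
    "LC le (Poly_Mapping.single u c * h) = c * LC le h"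
proof -
  let ?m = "Poly_Mapping.single u c * h"
  show ip: "is_poly n ?m" using is_poly_mult[OF is_poly_single[OF u] h(1)] .
  have k: "Poly_Mapping.keys ?m = (+) u ` Poly_Mapping.keys h" using keys_single_mult_eq[OF c] .
  have lt: "LT le h \<in> Poly_Mapping.keys h" using LT_props(1)[OF h] .
  then show "?m \<noteq> 0" using k by auto
  have "LT le ?m = u + LT le h"
  proof (rule LT_eq[OF ip])
    show "u + LT le h \<in> Poly_Mapping.keys ?m" using k lt by auto
    show "\<forall>s\<in>Poly_Mapping.keys ?m. le s (u + LT le h)"
    proof
      fix s assume "s \<in> Poly_Mapping.keys ?m"
      then obtain s' where s': "s' \<in> Poly_Mapping.keys h" "s = u + s'" using k by auto
      have "le s' (LT le h)" using LT_max[OF h(1) s'(1)] .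
      then show "le s (u + LT le h)" using mono2[of s' "LT le h" u] s' keys_PP[OF h(1)] lt u by auto
    qed
  qed
  then show "LT le ?m = u + LT le h" .
  then show "LC le ?m = c * LC le h" by (simp add: LC_def lookup_single_mult)
qed

lemma LT_diff_lt:
  fixes f g :: "'a::comm_ring_1 mpoly"
  assumes f: "is_poly n f" "f \<noteq> 0" and g: "is_poly n g" "g \<noteq> 0"
    and eqT: "LT le f = LT le g" and eqC: "LC le f = LC le g" and nz: "f - g \<noteq> 0"
  shows "lt (LT le (f - g)) (LT le f)"
proof -
  have ip: "is_poly n (f - g)" using is_poly_diff[OF f(1) g(1)] .
  have k: "LT le (f - g) \<in> Poly_Mapping.keys (f - g)" using LT_props(1)[OF ip nz] .
  then have "LT le (f - g) \<in> Poly_Mapping.keys f \<union> Poly_Mapping.keys g" using keys_minus_sub[of f g] by (rule subsetD[rotated])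
  then have "le (LT le (f - g)) (LT le f)" using LT_max[OF f(1)] LT_max[OF g(1)] eqT by auto
  moreover have "LT le (f - g) \<noteq> LT le f"
  proof
    assume "LT le (f - g) = LT le f"
    then have "Poly_Mapping.lookup (f - g) (LT le f) \<noteq> 0" using k by (simp add: in_keys_iff)
    then show False using eqC eqT by (simp add: lookup_minus LC_def)
  qed
  ultimately show ?thesis by (simp add: lt_def)
qed

lemma LT_comb:
  fixes f g :: "'a::comm_ring_1 mpoly"
  assumes f: "is_poly n f" "f \<noteq> 0" and g: "is_poly n g" "g \<noteq> 0"
    and eqT: "LT le f = LT le g" and nz: "r * LC le f + s * LC le g \<noteq> 0"
  defines "z \<equiv> Poly_Mapping.single 0 r * f + Poly_Mapping.single 0 s * g"
  shows "is_poly n z" "z \<noteq> 0" "LT le z = LT le f" "LC le z = r * LC le f + s * LC le g"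
proof -
  show ip: "is_poly n z" unfolding z_def
    by (intro is_poly_add is_poly_mult is_poly_single PP_zero f g)
  have lz: "Poly_Mapping.lookup z (LT le f) = r * LC le f + s * LC le g"
    unfolding z_def by (simp add: lookup_add lookup_smult LC_def eqT)
  then have kz: "LT le f \<in> Poly_Mapping.keys z" using nz by (simp add: in_keys_iff)
  then show "z \<noteq> 0" by auto
  have "Poly_Mapping.keys z \<subseteq> Poly_Mapping.keys f \<union> Poly_Mapping.keys g"
    unfolding z_def using keys_add[of "Poly_Mapping.single 0 r * f" "Poly_Mapping.single 0 s * g"]
      keys_smult_sub[of r f] keys_smult_sub[of s g] by blast
  then have "\<forall>t\<in>Poly_Mapping.keys z. le t (LT le f)" using LT_max[OF f(1)] LT_max[OF g(1)] eqT by auto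
  then show lt: "LT le z = LT le f" using LT_eq[OF ip kz] by blast
  show "LC le z = r * LC le f + s * LC le g" using lz lt by (simp add: LC_def)
qed

lemma LT_dvd_le: "is_poly n f \<Longrightarrow> f \<noteq> 0 \<Longrightarrow> t \<in> Poly_Mapping.keys f \<Longrightarrow> pp_dvd (LT le f) t \<Longrightarrow> t = LT le f"
  using le_dvd LT_max antisym keys_PP LT_PP by (meson subsetD)

lemma prim_facts:
  assumes g: "is_poly n g" "g \<noteq> 0" "LC le g = 1"
  shows "Poly_Mapping.keys (prim g) = Poly_Mapping.keys g"
    "is_poly n (prim g)" "prim g \<noteq> 0" "LT le (prim g) = LT le g" "LC le (prim g) = int (den g)"
    "ri (prim g) = Poly_Mapping.single 0 (of_nat (den g)) * g"
    "\<And>p::int. prime p \<Longrightarrow> \<exists>k\<in>Poly_Mapping.keys g. \<not> p dvd Poly_Mapping.lookup (prim g) k"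
proof -
  have t0: "LT le g \<in> Poly_Mapping.keys g" "Poly_Mapping.lookup g (LT le g) = 1"
    using LT_props(1)[OF g(1,2)] g(3) unfolding LC_def by simp_all
  note pp = prim_props[OF t0]
  have dpos: "(of_nat (den g) :: rat) \<noteq> 0" using den_pos[of g] by (simp only: of_nat_eq_0_iff neq0_conv)
  have lk: "Poly_Mapping.lookup (prim g) k = 0 \<longleftrightarrow> Poly_Mapping.lookup g k = 0" for k
  proof -
    have e: "(of_int (Poly_Mapping.lookup (prim g) k) :: rat) = Poly_Mapping.lookup g k * of_nat (den g)"
      by (rule pp(1))
    show ?thesis
    proof
      assume "Poly_Mapping.lookup (prim g) k = 0"
      then have "Poly_Mapping.lookup g k * of_nat (den g) = 0" using e by simp
      then show "Poly_Mapping.lookup g k = 0" using dpos by simp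
    next
      assume "Poly_Mapping.lookup g k = 0"
      then have "(of_int (Poly_Mapping.lookup (prim g) k) :: rat) = 0" using e by simp
      then show "Poly_Mapping.lookup (prim g) k = 0" by simp
    qed
  qed
  show ks: "Poly_Mapping.keys (prim g) = Poly_Mapping.keys g"
    by (rule set_eqI) (simp only: in_keys_iff lk)
  show ip: "is_poly n (prim g)" using g(1) ks by (simp add: is_poly_def)
  show nz: "prim g \<noteq> 0" using ks g(2) by (metis keys_eq_empty)
  show lt: "LT le (prim g) = LT le g"
    using LT_eq[OF ip] ks t0(1) LT_max[OF g(1)] by simp
  show "LC le (prim g) = int (den g)"
    using pp(1)[of "LT le g"] t0(2) lt by (simp add: LC_def)
  show "ri (prim g) = Poly_Mapping.single 0 (of_nat (den g)) * g"
    by (rule poly_mapping_eqI) (subst lookup_smult, subst lookup_ri, subst pp(1), rule mult.commute)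
  fix p :: int assume p: "prime p"
  show "\<exists>k\<in>Poly_Mapping.keys g. \<not> p dvd Poly_Mapping.lookup (prim g) k"
  proof (rule ccontr)
    assume "\<not> ?thesis"
    then have "p dvd Gcd (Poly_Mapping.lookup (prim g) ` Poly_Mapping.keys (prim g))"
      using ks by (auto simp: dvd_Gcd_iff)
    then have "p dvd 1" using pp(2) by simp
    then show False using p not_prime_unit by blast
  qed
qed

end

lemma LM_dvd_trans: "LM_dvd le a b \<Longrightarrow> LM_dvd le b c \<Longrightarrow> LM_dvd le a c"
  unfolding LM_dvd_def using dvd_trans pp_dvd_trans by blast

lemma finite_pos_divisors: "(x::int) \<noteq> 0 \<Longrightarrow> finite {v. 0 < v \<and> v dvd x}"
proof -
  assume x: "x \<noteq> 0"
  have "{v. 0 < v \<and> v dvd x} \<subseteq> {0..\<bar>x\<bar>}"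
  proof
    fix v assume "v \<in> {v. 0 < v \<and> v dvd x}"
    then have "0 < v" "v dvd x" by auto
    then have "0 < v" "\<bar>v\<bar> \<le> \<bar>x\<bar>" using dvd_imp_le_int[OF x, of v] by auto
    then show "v \<in> {0..\<bar>x\<bar>}" by simp
  qed
  then show ?thesis using finite_subset by blast
qed

context tord begin

lemma div_gen:
  fixes J :: "int mpoly set"
  assumes J: "is_ideal n J" and B: "finite B" "B \<subseteq> J"
    and strong: "\<forall>f\<in>J. f \<noteq> 0 \<longrightarrow> (\<exists>g\<in>B. LM_dvd le g f)"
    and f: "f \<in> J"
  shows "f \<in> ideal_gen n B"
proof -
  let ?IG = "ideal_gen n B"
  have IG: "is_ideal n ?IG" using ideal_gen_ideal[OF B(1)] B(2) ideal_poly[OF J] by blast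
  have main: "\<forall>f. f \<in> J \<and> f \<noteq> 0 \<and> LT le f = t \<longrightarrow> f \<in> ?IG" if t: "t \<in> PP n" for t
  proof (rule lt_induct[OF t])
    fix t assume tP: "t \<in> PP n"
      and IH: "\<And>s. s \<in> PP n \<Longrightarrow> lt s t \<Longrightarrow> \<forall>f. f \<in> J \<and> f \<noteq> 0 \<and> LT le f = s \<longrightarrow> f \<in> ?IG"
    show "\<forall>f. f \<in> J \<and> f \<noteq> 0 \<and> LT le f = t \<longrightarrow> f \<in> ?IG"
    proof (intro allI impI)
      fix f assume fa: "f \<in> J \<and> f \<noteq> 0 \<and> LT le f = t"
      then have fJ: "f \<in> J" and fnz: "f \<noteq> 0" and ft: "LT le f = t" by auto
      have fp: "is_poly n f" using ideal_poly[OF J fJ] .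
      obtain g where g: "g \<in> B" "LM_dvd le g f" using strong fJ fnz by blast
      have gJ: "g \<in> J" using g(1) B(2) by blast
      have gp: "is_poly n g" using ideal_poly[OF J gJ] .
      have gnz: "g \<noteq> 0"
      proof
        assume "g = 0"
        then have "LC le g = 0" by (simp add: LC_def)
        then show False using g(2) LC_nz[OF fp fnz] by (simp add: LM_dvd_def)
      qed
      obtain q where q: "LC le f = LC le g * q" using g(2) by (auto simp: LM_dvd_def)
      obtain u where u: "t = LT le g + u" using g(2) ft by (auto simp: LM_dvd_def pp_dvd_def)
      have "pp_dvd u t" unfolding pp_dvd_def using u by (intro exI[of _ "LT le g"]) (simp add: add.commute)
      then have uP: "u \<in> PP n" using PP_dvd tP by blast
      have qnz: "q \<noteq> 0" using q LC_nz[OF fp fnz] by auto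
      define m where "m = Poly_Mapping.single u q * g"
      note lm = LT_single_mult[OF gp gnz qnz uP]
      have mIG: "m \<in> ?IG" unfolding m_def
        by (rule ideal_mult[OF IG ideal_gen_gen[OF B(1) g(1)] is_poly_single[OF uP]])
      have mJ: "m \<in> J" unfolding m_def by (rule ideal_mult[OF J gJ is_poly_single[OF uP]])
      have mT: "LT le m = LT le f" using lm(3) u ft unfolding m_def by (simp add: add.commute)
      have mC: "LC le m = LC le f" using lm(4) q unfolding m_def by (simp add: mult.commute)
      show "f \<in> ?IG"
      proof (cases "f - m = 0")
        case True then show ?thesis using mIG by simp
      next
        case False
        have lt': "lt (LT le (f - m)) (LT le f)"
          using LT_diff_lt[OF fp fnz lm(1)[folded m_def] lm(2)[folded m_def] mT[symmetric] mC[symmetric] False] .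
        have dJ: "f - m \<in> J" using ideal_minus[OF J fJ mJ] .
        have dp: "is_poly n (f - m)" using ideal_poly[OF J dJ] .
        have "f - m \<in> ?IG" using IH[OF LT_PP[OF dp False]] lt' ft dJ False by blast
        then have "(f - m) + m \<in> ?IG" using ideal_add[OF IG _ mIG] by blast
        then show ?thesis by simp
      qed
    qed
  qed
  show ?thesis
  proof (cases "f = 0")
    case True then show ?thesis using ideal_zero[OF IG] by simp
  next
    case False
    then show ?thesis using main[OF LT_PP[OF ideal_poly[OF J f] False]] f by blast
  qed
qed

lemma strong_from:
  fixes J :: "int mpoly set"
  assumes J: "is_ideal n J" and B: "finite B" "B \<subseteq> J" "0 \<notin> B"
    and strong: "\<forall>f\<in>J. f \<noteq> 0 \<longrightarrow> (\<exists>g\<in>B. LM_dvd le g f)"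
  shows "strong_GB n le J B"
  unfolding strong_GB_def
proof (intro conjI)
  show "finite B" "0 \<notin> B" using B by auto
  show "\<forall>g\<in>B. is_poly n g" using B(2) ideal_poly[OF J] by blast
  show "ideal_gen n B = J"
  proof
    show "ideal_gen n B \<subseteq> J" using ideal_gen_sub[OF J B(2)] .
    show "J \<subseteq> ideal_gen n B" using div_gen[OF J B(1,2) strong] by blast
  qed
  show "\<forall>f\<in>J. f \<noteq> 0 \<longrightarrow> (\<exists>g\<in>B. LM_dvd le g f)" using strong .
qed

lemma minimalize:
  fixes J :: "int mpoly set"
  assumes J: "is_ideal n J"
  shows "finite B \<Longrightarrow> B \<subseteq> J \<Longrightarrow> 0 \<notin> B \<Longrightarrow> (\<forall>f\<in>J. f \<noteq> 0 \<longrightarrow> (\<exists>g\<in>B. LM_dvd le g f)) \<Longrightarrow>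
    \<exists>B'. minimal_strong_GB n le J B'"
proof (induction "card B" arbitrary: B rule: less_induct)
  case less
  show ?case
  proof (cases "\<forall>g\<in>B. \<forall>g'\<in>B. g \<noteq> g' \<longrightarrow> \<not> LM_dvd le g g'")
    case True
    then show ?thesis using strong_from[OF J less(2,3,4,5)] unfolding minimal_strong_GB_def by blast
  next
    case False
    then obtain g g' where gg: "g \<in> B" "g' \<in> B" "g \<noteq> g'" "LM_dvd le g g'" by blast
    let ?B = "B - {g'}"
    have "card ?B < card B" using less(2) gg(2) by (rule card_Diff1_less)
    moreover have "\<forall>f\<in>J. f \<noteq> 0 \<longrightarrow> (\<exists>h\<in>?B. LM_dvd le h f)"
    proof (intro ballI impI)
      fix f assume "f \<in> J" "f \<noteq> 0"
      then obtain h where h: "h \<in> B" "LM_dvd le h f" using less(5) by blast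
      show "\<exists>h\<in>?B. LM_dvd le h f"
      proof (cases "h = g'")
        case True then show ?thesis using gg h LM_dvd_trans[of le g g' f] by auto
      next
        case False then show ?thesis using h by auto
      qed
    qed
    ultimately show ?thesis using less(1)[of ?B] less(2,3,4) by blast
  qed
qed

lemma exists_strong:
  fixes J :: "int mpoly set"
  assumes J: "is_ideal n J"
  shows "\<exists>B. finite B \<and> B \<subseteq> J \<and> 0 \<notin> B \<and> (\<forall>f\<in>J. f \<noteq> 0 \<longrightarrow> (\<exists>g\<in>B. LM_dvd le g f))"
proof -
  define T0 where "T0 = {LT le f | f. f \<in> J \<and> f \<noteq> 0}"
  have T0P: "T0 \<subseteq> PP n" unfolding T0_def using LT_PP ideal_poly[OF J] by blast
  obtain T1 where T1: "finite T1" "T1 \<subseteq> T0" "\<forall>s\<in>T0. \<exists>f\<in>T1. pp_dvd f s"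
    using dickson[OF T0P] by (elim exE conjE) (rule that)
  have ex1: "\<forall>t\<in>T1. \<exists>f. f \<in> J \<and> f \<noteq> 0 \<and> LT le f = t" using T1(2) unfolding T0_def by blast
  obtain w where w: "\<And>t. t \<in> T1 \<Longrightarrow> w t \<in> J \<and> w t \<noteq> 0 \<and> LT le (w t) = t"
    using bchoice[OF ex1] by (elim exE) (metis (no_types, lifting))
  define V where "V = (\<Union>t\<in>T1. {v. 0 < v \<and> v dvd LC le (w t)})"
  have wLC: "LC le (w t) \<noteq> 0" if "t \<in> T1" for t
    using w[OF that] LC_nz ideal_poly[OF J] by blast
  have finV: "finite V" unfolding V_def using T1(1) finite_pos_divisors wLC by blast
  define M where "M v = {LT le f | f. f \<in> J \<and> f \<noteq> 0 \<and> LC le f = v}" for v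
  have "\<forall>v. \<exists>F. finite F \<and> F \<subseteq> M v \<and> (\<forall>s\<in>M v. \<exists>f\<in>F. pp_dvd f s)"
  proof
    fix v have "M v \<subseteq> PP n" unfolding M_def using LT_PP ideal_poly[OF J] by blast
    then show "\<exists>F. finite F \<and> F \<subseteq> M v \<and> (\<forall>s\<in>M v. \<exists>f\<in>F. pp_dvd f s)" by (rule dickson)
  qed
  then obtain F where F: "\<And>v. finite (F v)" "\<And>v. F v \<subseteq> M v" "\<And>v. \<forall>s\<in>M v. \<exists>f\<in>F v. pp_dvd f s"
    by metis
  have "\<forall>x. \<exists>f. x \<in> Sigma UNIV F \<longrightarrow> (f \<in> J \<and> f \<noteq> 0 \<and> LC le f = fst x \<and> LT le f = snd x)"
  proof
    fix x show "\<exists>f. x \<in> Sigma UNIV F \<longrightarrow> (f \<in> J \<and> f \<noteq> 0 \<and> LC le f = fst x \<and> LT le f = snd x)"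
    proof (cases "x \<in> Sigma UNIV F")
      case True
      then have "snd x \<in> F (fst x)" by (metis SigmaE fst_conv snd_conv)
      then have "snd x \<in> M (fst x)" using F(2) by (rule subsetD[rotated])
      then obtain f where f: "snd x = LT le f" "f \<in> J" "f \<noteq> 0" "LC le f = fst x"
        unfolding M_def mem_Collect_eq by (elim exE conjE) (rule that)
      show ?thesis by (rule exI[of _ f]) (simp add: f)
    qed simp
  qed
  then obtain wit where wit: "\<And>x. x \<in> Sigma UNIV F \<Longrightarrow> wit x \<in> J \<and> wit x \<noteq> 0 \<and> LC le (wit x) = fst x \<and> LT le (wit x) = snd x"
    by metis
  define B where "B = wit ` Sigma V F"
  have "finite B" unfolding B_def using finV F(1) by auto
  moreover have "B \<subseteq> J" "0 \<notin> B" unfolding B_def using wit by fastforce+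
  moreover have "\<forall>f\<in>J. f \<noteq> 0 \<longrightarrow> (\<exists>g\<in>B. LM_dvd le g f)"
  proof (intro ballI impI)
    fix f assume fJ: "f \<in> J" and fnz: "f \<noteq> 0"
    have fp: "is_poly n f" using ideal_poly[OF J fJ] .
    define t where "t = LT le f"
    have "t \<in> T0" unfolding T0_def t_def using fJ fnz by blast
    then obtain t' where t': "t' \<in> T1" "pp_dvd t' t" using T1(3) by blast
    obtain u where u: "t = t' + u" using t'(2) by (auto simp: pp_dvd_def)
    have tP: "t \<in> PP n" unfolding t_def using LT_PP[OF fp fnz] .
    have "pp_dvd u t" unfolding pp_dvd_def using u by (intro exI[of _ t']) (simp add: add.commute)
    then have uP: "u \<in> PP n" using PP_dvd tP by blast
    have wJ: "w t' \<in> J" and wnz: "w t' \<noteq> 0" and wT: "LT le (w t') = t'" using w[OF t'(1)] by auto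
    have wp: "is_poly n (w t')" using ideal_poly[OF J wJ] .
    define h where "h = Poly_Mapping.single u 1 * w t'"
    note lh = LT_single_mult[OF wp wnz one_neq_zero uP, folded h_def]
    have hJ: "h \<in> J" unfolding h_def by (rule ideal_mult[OF J wJ is_poly_single[OF uP]])
    have hT: "LT le h = t" using lh(3) wT u by (simp add: add.commute)
    have hC: "LC le h = LC le (w t')" using lh(4) by simp
    define c' where "c' = LC le (w t')"
    have c'nz: "c' \<noteq> 0" unfolding c'_def using wLC[OF t'(1)] .
    define v where "v = gcd (LC le f) c'"
    have vpos: "v > 0" unfolding v_def using c'nz by simp
    obtain r s where rs: "r * LC le f + s * c' = v" unfolding v_def using bezout_int by blast
    define z where "z = Poly_Mapping.single 0 r * f + Poly_Mapping.single 0 s * h"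
    have eqT: "LT le f = LT le h" using hT t_def by simp
    have nz: "r * LC le f + s * LC le h \<noteq> 0" using rs vpos hC c'_def by simp
    note lz = LT_comb[OF fp fnz lh(1) lh(2) eqT nz, folded z_def]
    have zJ: "z \<in> J" unfolding z_def
      by (intro ideal_add[OF J] ideal_mult[OF J] fJ hJ is_poly_single PP_zero)
    have zT: "LT le z = t" using lz(3) t_def by simp
    have zC: "LC le z = v" using lz(4) rs hC c'_def by simp
    have vV: "v \<in> V" unfolding V_def using t'(1) vpos c'_def v_def by auto
    have "t \<in> M v" unfolding M_def using zJ lz(2) zC zT by blast
    then obtain s0 where s0: "s0 \<in> F v" "pp_dvd s0 t" using F(3) by blast
    have xin: "(v, s0) \<in> Sigma UNIV F" using s0 by simp
    have "wit (v, s0) \<in> B" unfolding B_def using vV s0(1) by blast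
    moreover have "LM_dvd le (wit (v, s0)) f"
      using wit[OF xin] s0(2) t_def unfolding LM_dvd_def v_def by simp
    ultimately show "\<exists>g\<in>B. LM_dvd le g f" by blast
  qed
  ultimately show ?thesis by blast
qed

lemma min_GB_sub:
  assumes "minimal_strong_GB n le J B"
  shows "B \<subseteq> J" "finite B" "0 \<notin> B" "\<forall>f\<in>J. f \<noteq> 0 \<longrightarrow> (\<exists>g\<in>B. LM_dvd le g f)"
    "\<forall>g\<in>B. \<forall>g'\<in>B. g \<noteq> g' \<longrightarrow> \<not> LM_dvd le g g'"
  using assms ideal_gen_gen[of B _ n] unfolding minimal_strong_GB_def strong_GB_def by auto

lemma lcm_dvd_other:
  assumes B1: "minimal_strong_GB n le J B1" and B2: "minimal_strong_GB n le J B2"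
  shows "Lcm (LC le ` B1) dvd Lcm (LC le ` B2)"
proof (rule Lcm_least)
  fix a assume "a \<in> LC le ` B1"
  then obtain b1 where b1: "b1 \<in> B1" "a = LC le b1" by blast
  note m1 = min_GB_sub[OF B1] and m2 = min_GB_sub[OF B2]
  have "b1 \<in> J" "b1 \<noteq> 0" using b1 m1 by auto
  then obtain b2 where b2: "b2 \<in> B2" "LM_dvd le b2 b1" using m2(4) by blast
  have "b2 \<in> J" "b2 \<noteq> 0" using b2 m2 by auto
  then obtain b1' where b1': "b1' \<in> B1" "LM_dvd le b1' b2" using m1(4) by blast
  have "LM_dvd le b1' b1" using LM_dvd_trans b1'(2) b2(2) by blast
  then have "b1' = b1" using m1(5) b1 b1' by blast
  then have "LC le b1 dvd LC le b2" using b1' by (simp add: LM_dvd_def)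
  also have "LC le b2 dvd Lcm (LC le ` B2)" using b2 by (simp add: dvd_Lcm)
  finally show "a dvd Lcm (LC le ` B2)" using b1 by simp
qed

lemma lcm_sigma_eq:
  assumes B: "minimal_strong_GB n le J B"
  shows "lcm_sigma n le J = nat (Lcm (LC le ` B))"
  unfolding lcm_sigma_def
proof (rule the_equality)
  show "\<exists>B'. minimal_strong_GB n le J B' \<and> nat (Lcm (LC le ` B)) = nat (Lcm (LC le ` B'))"
    using B by blast
  fix m assume "\<exists>B'. minimal_strong_GB n le J B' \<and> m = nat (Lcm (LC le ` B'))"
  then obtain B' where B': "minimal_strong_GB n le J B'" "m = nat (Lcm (LC le ` B'))" by blast
  have "Lcm (LC le ` B') = Lcm (LC le ` B)"
    using lcm_dvd_other[OF B B'(1)] lcm_dvd_other[OF B'(1) B] by (simp add: zdvd_antisym_nonneg)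
  then show "m = nat (Lcm (LC le ` B))" using B'(2) by simp
qed

lemma exists_min_GB:
  fixes J :: "int mpoly set"
  assumes J: "is_ideal n J"
  shows "\<exists>B. minimal_strong_GB n le J B"
  using exists_strong[OF J] minimalize[OF J] by blast

end

lemma LT_ri: "LT le (ri f) = LT le f"
  unfolding LT_def keys_ri ..

locale setting = tord +
  fixes I G :: "rat mpoly set"
  assumes I: "is_ideal n I" and GB: "reduced_GB n le I G"
begin

abbreviation JJ where "JJ \<equiv> ideal_gen n (prim ` G)"

lemma finG: "finite G" using GB by (simp add: reduced_GB_def)
lemma G_I: "g \<in> G \<Longrightarrow> g \<in> I" using GB by (auto simp: reduced_GB_def)
lemma G_poly: "g \<in> G \<Longrightarrow> is_poly n g" using ideal_poly[OF I G_I] .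
lemma G_nz: "g \<in> G \<Longrightarrow> g \<noteq> 0" using GB by (auto simp: reduced_GB_def)
lemma G_LC: "g \<in> G \<Longrightarrow> LC le g = 1" using GB by (auto simp: reduced_GB_def)
lemma G_cover: "f \<in> I \<Longrightarrow> f \<noteq> 0 \<Longrightarrow> \<exists>g\<in>G. pp_dvd (LT le g) (LT le f)"
  using GB by (auto simp: reduced_GB_def)
lemma G_red: "g \<in> G \<Longrightarrow> g' \<in> G \<Longrightarrow> g \<noteq> g' \<Longrightarrow> t \<in> Poly_Mapping.keys g \<Longrightarrow> \<not> pp_dvd (LT le g') t"
  using GB unfolding reduced_GB_def by blast

lemma G_prim: "g \<in> G \<Longrightarrow> Poly_Mapping.keys (prim g) = Poly_Mapping.keys g \<and>
    is_poly n (prim g) \<and> prim g \<noteq> 0 \<and> LT le (prim g) = LT le g \<and> LC le (prim g) = int (den g) \<and>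
    ri (prim g) = Poly_Mapping.single 0 (of_nat (den g)) * g"
  using prim_facts[OF G_poly G_nz G_LC] by blast

lemma G_prim_coeff: "g \<in> G \<Longrightarrow> prime (p::int) \<Longrightarrow> \<exists>k\<in>Poly_Mapping.keys g. \<not> p dvd Poly_Mapping.lookup (prim g) k"
  using prim_facts(7)[OF G_poly G_nz G_LC] by blast

lemma J_ideal: "is_ideal n JJ"
  using ideal_gen_ideal[of "prim ` G" n] finG G_prim by auto

lemma prim_J: "g \<in> G \<Longrightarrow> prim g \<in> JJ"
  using ideal_gen_gen[of "prim ` G" "prim g" n] finG by auto

lemma ri_J: "f \<in> JJ \<Longrightarrow> ri f \<in> I"
proof -
  assume "f \<in> JJ"
  then obtain c where c: "f = (\<Sum>q\<in>prim ` G. c q * q)" "\<forall>q\<in>prim ` G. is_poly n (c q)"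
    by (auto simp: ideal_gen_def)
  have "ri f = (\<Sum>q\<in>prim ` G. ri (c q) * ri q)" using c(1) by (simp add: ri_sum ri_mult)
  also have "\<dots> \<in> I"
  proof (rule ideal_sum[OF I])
    fix q assume q: "q \<in> prim ` G"
    then obtain g where g: "g \<in> G" "q = prim g" by blast
    have "ri q = Poly_Mapping.single 0 (of_nat (den g)) * g" using G_prim[OF g(1)] g(2) by simp
    also have "\<dots> \<in> I" by (rule ideal_mult[OF I G_I[OF g(1)] is_poly_single[OF PP_zero]])
    finally have "ri q \<in> I" .
    then show "ri (c q) * ri q \<in> I" using ideal_mult[OF I _ is_poly_ri[THEN iffD2, OF c(2)[rule_format, OF q]]] by blast
  qed
  finally show ?thesis .
qed

lemma J_cover: "f \<in> JJ \<Longrightarrow> f \<noteq> 0 \<Longrightarrow> \<exists>g\<in>G. pp_dvd (LT le g) (LT le f)"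
  using G_cover[OF ri_J] ri_eq_0 LT_ri by metis

lemma dirA:
  assumes B: "minimal_strong_GB n le JJ B" and b: "b \<in> B" and p: "prime (p::int)" and pd: "p dvd LC le b"
  shows "\<exists>g\<in>G. p dvd int (den g)"
proof (rule ccontr)
  assume nd: "\<not> ?thesis"
  note mB = min_GB_sub[OF B]
  have bJ: "b \<in> JJ" and bnz: "b \<noteq> 0" using b mB by auto
  have bp: "is_poly n b" using ideal_poly[OF J_ideal bJ] .
  define t where "t = LT le b"
  obtain g where g: "g \<in> G" "pp_dvd (LT le g) t" using J_cover[OF bJ bnz] t_def by blast
  note gp = G_prim[OF g(1)]
  define e where "e = prim g"
  have eJ: "e \<in> JJ" using prim_J[OF g(1)] e_def by simp
  have ep: "is_poly n e" "e \<noteq> 0" "LT le e = LT le g" "LC le e = int (den g)" using gp e_def by auto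
  obtain u where u: "t = LT le g + u" using g(2) by (auto simp: pp_dvd_def)
  have tP: "t \<in> PP n" unfolding t_def using LT_PP[OF bp bnz] .
  have "pp_dvd u t" unfolding pp_dvd_def using u by (intro exI[of _ "LT le g"]) (simp add: add.commute)
  then have uP: "u \<in> PP n" using PP_dvd tP by blast
  define h where "h = Poly_Mapping.single u 1 * e"
  note lh = LT_single_mult[OF ep(1) ep(2) one_neq_zero uP, folded h_def]
  have hJ: "h \<in> JJ" unfolding h_def by (rule ideal_mult[OF J_ideal eJ is_poly_single[OF uP]])
  have hT: "LT le h = t" using lh(3) ep(3) u by (simp add: add.commute)
  have hC: "LC le h = int (den g)" using lh(4) ep(4) by simp
  define v where "v = gcd (LC le b) (int (den g))"
  have vnz: "v \<noteq> 0" unfolding v_def using LC_nz[OF bp bnz] by simp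
  obtain r s where rs: "r * LC le b + s * int (den g) = v" unfolding v_def using bezout_int by blast
  define z where "z = Poly_Mapping.single 0 r * b + Poly_Mapping.single 0 s * h"
  have eqT: "LT le b = LT le h" using hT t_def by simp
  have nz: "r * LC le b + s * LC le h \<noteq> 0" using rs vnz hC by simp
  note lz = LT_comb[OF bp bnz lh(1) lh(2) eqT nz, folded z_def]
  have zJ: "z \<in> JJ" unfolding z_def
    by (intro ideal_add[OF J_ideal] ideal_mult[OF J_ideal] bJ hJ is_poly_single PP_zero)
  obtain b' where b': "b' \<in> B" "LM_dvd le b' z" using mB(4) zJ lz(2) by blast
  have zC: "LC le z = v" using lz(4) rs hC by simp
  have zT: "LT le z = LT le b" using lz(3) .
  have "LC le b' dvd v" using b'(2) zC unfolding LM_dvd_def by simp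
  then have "LC le b' dvd LC le b" unfolding v_def using gcd_dvd1 dvd_trans by blast
  moreover have "pp_dvd (LT le b') (LT le b)" using b'(2) zT unfolding LM_dvd_def by simp
  ultimately have "LM_dvd le b' b" unfolding LM_dvd_def by simp
  then have "b' = b" using mB(5) b'(1) b by blast
  then have "LC le b dvd v" using b'(2) zC unfolding LM_dvd_def by simp
  then have "LC le b dvd int (den g)" unfolding v_def using gcd_dvd2 dvd_trans by blast
  then have "p dvd int (den g)" using pd dvd_trans by blast
  then show False using nd g(1) by blast
qed

end

context setting begin

lemma dirB:
  assumes B: "minimal_strong_GB n le JJ B" and g: "g \<in> G" and p: "prime (p::int)" and pd: "p dvd int (den g)"
  shows "\<exists>b\<in>B. p dvd LC le b"
proof (rule ccontr)
  assume nb: "\<not> ?thesis"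
  note mB = min_GB_sub[OF B]
  note gp = G_prim[OF g]
  define f0 where "f0 = prim g"
  define S where "S = {k \<in> Poly_Mapping.keys g. \<not> p dvd Poly_Mapping.lookup f0 k}"
  have Sne: "S \<noteq> {}" using G_prim_coeff[OF g p] unfolding S_def f0_def by blast
  have Sfin: "finite S" unfolding S_def by simp
  have SP: "S \<subseteq> PP n" unfolding S_def using keys_PP[OF G_poly[OF g]] by blast
  obtain ts where ts: "ts \<in> S" "\<forall>s\<in>S. le s ts" using max_exists[OF Sfin Sne SP] by blast
  have tsk: "ts \<in> Poly_Mapping.keys g" and tsnd: "\<not> p dvd Poly_Mapping.lookup f0 ts"
    using ts(1) unfolding S_def by auto
  have tsP: "ts \<in> PP n" using SP ts(1) by blast
  have above: "p dvd Poly_Mapping.lookup f0 k" if "lt ts k" "k \<in> PP n" for k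
  proof (rule ccontr)
    assume nk: "\<not> p dvd Poly_Mapping.lookup f0 k"
    then have "Poly_Mapping.lookup f0 k \<noteq> 0" by auto
    then have "k \<in> Poly_Mapping.keys g" using gp f0_def by (simp add: in_keys_iff[symmetric])
    then have "k \<in> S" using nk unfolding S_def by blast
    then have "le k ts" using ts(2) by blast
    then show False using that antisym[OF tsP \<open>k \<in> PP n\<close>] by (auto simp: lt_def)
  qed
  have tsLT: "ts \<noteq> LT le g"
  proof
    assume "ts = LT le g"
    have e1: "LT le f0 = LT le g" "LC le f0 = int (den g)" using gp f0_def by auto
    then have "Poly_Mapping.lookup f0 ts = int (den g)" using \<open>ts = LT le g\<close> unfolding LC_def by simp
    then show False using tsnd pd by simp
  qed
  define Inv where "Inv f \<longleftrightarrow> f \<in> JJ \<and> \<not> p dvd Poly_Mapping.lookup f ts \<and>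
      (\<forall>k. lt ts k \<longrightarrow> k \<in> PP n \<longrightarrow> p dvd Poly_Mapping.lookup f k)" for f
  have Inv_nz: "f \<noteq> 0" if "Inv f" for f using that unfolding Inv_def by auto
  have Inv_ts: "ts \<in> Poly_Mapping.keys f" if "Inv f" for f
    using that unfolding Inv_def by (auto simp: in_keys_iff)
  have claim: "\<forall>f. Inv f \<and> LT le f = s \<longrightarrow> (\<exists>f'. Inv f' \<and> LT le f' = ts)" if sP: "s \<in> PP n" for s
  proof (rule lt_induct[OF sP])
    fix s assume sP: "s \<in> PP n"
      and IH: "\<And>s'. s' \<in> PP n \<Longrightarrow> lt s' s \<Longrightarrow> \<forall>f. Inv f \<and> LT le f = s' \<longrightarrow> (\<exists>f'. Inv f' \<and> LT le f' = ts)"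
    show "\<forall>f. Inv f \<and> LT le f = s \<longrightarrow> (\<exists>f'. Inv f' \<and> LT le f' = ts)"
    proof (intro allI impI)
      fix f assume fa: "Inv f \<and> LT le f = s"
      then have If: "Inv f" and fs: "LT le f = s" by auto
      have fJ: "f \<in> JJ" using If unfolding Inv_def by blast
      have fp: "is_poly n f" using ideal_poly[OF J_ideal fJ] .
      have fnz: "f \<noteq> 0" using Inv_nz[OF If] .
      show "\<exists>f'. Inv f' \<and> LT le f' = ts"
      proof (cases "s = ts")
        case True then show ?thesis using If fs by blast
      next
        case False
        have "le ts s" using LT_max[OF fp Inv_ts[OF If]] fs by simp
        then have lts: "lt ts s" using False by (simp add: lt_def)
        have pa: "p dvd LC le f" using If lts sP fs unfolding Inv_def LC_def by blast
        obtain b where b: "b \<in> B" "LM_dvd le b f" using mB(4) fJ fnz by blast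
        have bJ: "b \<in> JJ" and bnz: "b \<noteq> 0" using b(1) mB by auto
        have bp: "is_poly n b" using ideal_poly[OF J_ideal bJ] .
        have pb: "\<not> p dvd LC le b" using nb b(1) by blast
        obtain u where u: "s = LT le b + u" using b(2) fs by (auto simp: LM_dvd_def pp_dvd_def)
        have "pp_dvd u s" unfolding pp_dvd_def using u by (intro exI[of _ "LT le b"]) (simp add: add.commute)
        then have uP: "u \<in> PP n" using PP_dvd sP by blast
        define \<alpha> where "\<alpha> = LC le f"
        define \<beta> where "\<beta> = LC le b"
        have anz: "\<alpha> \<noteq> 0" unfolding \<alpha>_def using LC_nz[OF fp fnz] .
        have bnz': "\<beta> \<noteq> 0" unfolding \<beta>_def using LC_nz[OF bp bnz] .
        define F1 where "F1 = Poly_Mapping.single 0 \<beta> * f"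
        define m where "m = Poly_Mapping.single u \<alpha> * b"
        note l1 = LT_single_mult[OF fp fnz bnz' PP_zero, folded F1_def]
        note l2 = LT_single_mult[OF bp bnz anz uP, folded m_def]
        have T1: "LT le F1 = s" using l1(3) fs by simp
        have T2: "LT le m = s" using l2(3) u by (simp add: add.commute)
        have C1: "LC le F1 = \<beta> * \<alpha>" using l1(4) \<alpha>_def by simp
        have C2: "LC le m = \<beta> * \<alpha>" using l2(4) \<beta>_def by (simp add: mult.commute)
        define f' where "f' = F1 - m"
        have lm: "p dvd Poly_Mapping.lookup m k" for k
          unfolding m_def lookup_single_mult_gen using pa \<alpha>_def by simp
        have lf': "Poly_Mapping.lookup f' k = \<beta> * Poly_Mapping.lookup f k - Poly_Mapping.lookup m k" for k
          unfolding f'_def F1_def by (simp add: lookup_minus lookup_smult)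
        have f'J: "f' \<in> JJ" unfolding f'_def F1_def m_def
          by (intro ideal_minus[OF J_ideal] ideal_mult[OF J_ideal] fJ bJ is_poly_single PP_zero uP)
        have c1: "\<not> p dvd Poly_Mapping.lookup f' ts"
        proof
          assume "p dvd Poly_Mapping.lookup f' ts"
          then have "p dvd \<beta> * Poly_Mapping.lookup f ts" using lm[of ts] lf'[of ts]
            by (metis dvd_add_left_iff diff_add_cancel)
          then show False using prime_dvd_mult_iff[OF p] pb If unfolding Inv_def \<beta>_def by blast
        qed
        have c2: "\<forall>k. lt ts k \<longrightarrow> k \<in> PP n \<longrightarrow> p dvd Poly_Mapping.lookup f' k"
        proof (intro allI impI)
          fix k assume "lt ts k" "k \<in> PP n"
          then have "p dvd Poly_Mapping.lookup f k" using If unfolding Inv_def by blast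
          then show "p dvd Poly_Mapping.lookup f' k" using lm[of k] lf'[of k] by simp
        qed
        have If': "Inv f'" unfolding Inv_def using f'J c1 c2 by blast
        have f'nz: "F1 - m \<noteq> 0" using Inv_nz[OF If'] f'_def by simp
        have "lt (LT le (F1 - m)) (LT le F1)"
          by (rule LT_diff_lt[OF l1(1) l1(2) l2(1) l2(2)]) (use T1 T2 C1 C2 f'nz in auto)
        then have ltf': "lt (LT le f') s" using T1 f'_def by simp
        have f'p: "is_poly n f'" using ideal_poly[OF J_ideal f'J] .
        have "LT le f' \<in> PP n" using LT_PP[OF f'p Inv_nz[OF If']] .
        then show ?thesis using IH ltf' If' by blast
      qed
    qed
  qed
  have If0: "Inv f0" unfolding Inv_def
  proof (intro conjI allI impI)
    show "f0 \<in> JJ" using prim_J[OF g] f0_def by simp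
    show "\<not> p dvd Poly_Mapping.lookup f0 ts" using tsnd .
    fix k assume "lt ts k" "k \<in> PP n"
    then show "p dvd Poly_Mapping.lookup f0 k" using above by blast
  qed
  have f0p: "is_poly n f0" "f0 \<noteq> 0" using gp f0_def by auto
  obtain f' where f': "Inv f'" "LT le f' = ts" using claim[OF LT_PP[OF f0p]] If0 by blast
  have f'J: "f' \<in> JJ" using f'(1) unfolding Inv_def by blast
  obtain g' where g': "g' \<in> G" "pp_dvd (LT le g') ts" using J_cover[OF f'J Inv_nz[OF f'(1)]] f'(2) by auto
  show False
  proof (cases "g' = g")
    case True
    then have "ts = LT le g" using LT_dvd_le[OF G_poly[OF g] G_nz[OF g] tsk] g'(2) by simp
    then show False using tsLT by simp
  next
    case False
    then show False using G_red[OF g g'(1) _ tsk] g'(2) by auto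
  qed
qed

end

theorem theorem3p11:
  fixes n :: nat and le :: "pp \<Rightarrow> pp \<Rightarrow> bool"
    and I :: "rat mpoly set" and G :: "rat mpoly set"
  assumes "term_order n le"
    and "is_ideal n I" and "I \<noteq> {0}"
    and "reduced_GB n le I G"
  shows "rad (den_set G) = rad (lcm_sigma n le (ideal_gen n (prim ` G)))"
proof -
  interpret S: setting n le I G
    using assms(1,2,4) by (simp add: setting_def tord_def setting_axioms_def)
  obtain B where B: "minimal_strong_GB n le (ideal_gen n (prim ` G)) B"
    using S.exists_min_GB[OF S.J_ideal] by blast
  have L: "lcm_sigma n le (ideal_gen n (prim ` G)) = nat (Lcm (LC le ` B))"
    using S.lcm_sigma_eq[OF B] .
  note mB = S.min_GB_sub[OF B]
  have a0: "den_set G \<noteq> 0"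
  proof -
    have "0 \<notin> den ` G" using den_pos by (metis image_iff less_irrefl)
    then show ?thesis unfolding den_set_def using S.finG by (simp add: Lcm_0_iff)
  qed
  have LCnz: "LC le b \<noteq> 0" if "b \<in> B" for b
    using that mB S.LC_nz ideal_poly[OF S.J_ideal] by blast
  have b0': "Lcm (LC le ` B) \<noteq> 0"
  proof -
    have "0 \<notin> LC le ` B" using LCnz by auto
    then show ?thesis using mB(2) by (simp add: Lcm_0_iff)
  qed
  have bge: "Lcm (LC le ` B) \<ge> 0" by simp
  have b0: "nat (Lcm (LC le ` B)) \<noteq> 0" using b0' bge by linarith
  have key: "p dvd den_set G \<longleftrightarrow> p dvd nat (Lcm (LC le ` B))" if p: "prime p" for p :: nat
  proof -
    have pi: "prime (int p)" using p by simp
    have "p dvd den_set G \<longleftrightarrow> (\<exists>g\<in>G. p dvd den g)"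
      unfolding den_set_def using prime_dvd_Lcm_iff[OF p, of "den ` G"] S.finG by simp
    also have "\<dots> \<longleftrightarrow> (\<exists>g\<in>G. int p dvd int (den g))" by simp
    also have "\<dots> \<longleftrightarrow> (\<exists>b\<in>B. int p dvd LC le b)"
      using S.dirA[OF B _ pi] S.dirB[OF B _ pi] by blast
    also have "\<dots> \<longleftrightarrow> int p dvd Lcm (LC le ` B)"
      using prime_dvd_Lcm_iff[OF pi, of "LC le ` B"] mB(2) by simp
    also have "\<dots> \<longleftrightarrow> int p dvd int (nat (Lcm (LC le ` B)))" using bge by simp
    also have "\<dots> \<longleftrightarrow> p dvd nat (Lcm (LC le ` B))" by (rule of_nat_dvd_iff)
    finally show ?thesis .
  qed
  have "prime_factors (den_set G) = prime_factors (nat (Lcm (LC le ` B)))"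
    using key a0 b0 by (auto simp: in_prime_factors_iff)
  then show ?thesis unfolding L rad_def by simp
qed

end
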